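(* Let $A$ be a sequence algebra and $P$ a homogeneous normed $A$-module of finite type such that for every $n\in\mathbb N$ the coordinate subspace $P_n$ is isometrically isomorphic to $l_1^0(\Lambda_n)$ for some index set $\Lambda_n$. Then $P$ is extremely projective with respect to $\mathcal H$.
   Context: All normed algebras and modules are contractive ($\|ab\|\le\|a\|\|b\|$, $\|a\cdot x\|\le\|a\|\|x\|$), not necessarily complete; morphisms are bounded $A$-module maps. A morphism $\tau:Y\to X$ is coisometric if $\|\tau\|\le1$ and for every $x\in X$, $\varepsilon>0$ there is $y$ with $\tau(y)=x$, $\|y\|<\|x\|+\varepsilon$. $P$ is extremely projective with respect to a full subcategory $\mathcal K$ if for every coisometric morphism $\tau:Y\to X$ with $X,Y\in\mathcal K$, every bounded morphism $\varphi:P\to X$ and $\varepsilon>0$ there is a morphism $\psi:P\to Y$ with $\tau\psi=\varphi$ and $\|\psi\|<\|\varphi\|+\varepsilon$. $l_1^0(\Lambda)$: finitely supported functions on $\Lambda$ with the $l_1$-norm. A sequence algebra is a normed algebra of complex sequences with coordinatewise operations containing $c_{00}$ as a dense subalgebra, with $\|\mathbf p^n\|=1$, where $\mathbf p^n$ has $1$ in place $n$ and $0$ elsewhere. $x_n:=\mathbf p^n\cdot x$, $X_n:=\{\mathbf p^n\cdot x\}$. Essential: closed span of $\{a\cdot x\}$ is $X$. Homogeneous: $\|x_n\|\le\|y_n\|$ for all $n$ implies $\|x\|\le\|y\|$. Finite type: for each $x$, $x_n=0$ for large $n$. $\mathcal H$ is the full subcategory of essential homogeneous normed $A$-modules. 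*)

theory Defs
  imports "HOL-Analysis.Analysis"
begin

text \<open>Complex normed spaces are modelled as a type of class real_normed_vector
  (fixing the underlying real normed space) together with an explicit complex
  scalar multiplication compatible with the real one.\<close>

definition complex_normed_space :: "(complex \<Rightarrow> 'x::real_normed_vector \<Rightarrow> 'x) \<Rightarrow> bool" where
  "complex_normed_space sm \<longleftrightarrow>
     (\<forall>r x. sm (complex_of_real r) x = r *\<^sub>R x) \<and>
     (\<forall>c d x. sm (c * d) x = sm c (sm d x)) \<and>
     (\<forall>c d x. sm (c + d) x = sm c x + sm d x) \<and>
     (\<forall>c x y. sm c (x + y) = sm c x + sm c y) \<and>
     (\<forall>c x. norm (sm c x) = cmod c * norm x)"

definition pn :: "nat \<Rightarrow> nat \<Rightarrow> complex" where
  "pn n = (\<lambda>k. if k = n then 1 else 0)"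

definition finsupp_seq :: "(nat \<Rightarrow> complex) \<Rightarrow> bool" where
  "finsupp_seq a \<longleftrightarrow> finite {k. a k \<noteq> 0}"

definition sequence_algebra :: "(nat \<Rightarrow> complex) set \<Rightarrow> ((nat \<Rightarrow> complex) \<Rightarrow> real) \<Rightarrow> bool" where
  "sequence_algebra A nA \<longleftrightarrow>
     (\<lambda>k. 0) \<in> A \<and>
     (\<forall>a\<in>A. \<forall>b\<in>A. (\<lambda>k. a k + b k) \<in> A) \<and>
     (\<forall>a\<in>A. \<forall>b\<in>A. (\<lambda>k. a k * b k) \<in> A) \<and>
     (\<forall>c. \<forall>a\<in>A. (\<lambda>k. c * a k) \<in> A) \<and>
     (\<forall>a\<in>A. nA a \<ge> 0) \<and>
     (\<forall>a\<in>A. nA a = 0 \<longleftrightarrow> a = (\<lambda>k. 0)) \<and>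
     (\<forall>a\<in>A. \<forall>b\<in>A. nA (\<lambda>k. a k + b k) \<le> nA a + nA b) \<and>
     (\<forall>c. \<forall>a\<in>A. nA (\<lambda>k. c * a k) = cmod c * nA a) \<and>
     (\<forall>a\<in>A. \<forall>b\<in>A. nA (\<lambda>k. a k * b k) \<le> nA a * nA b) \<and>
     {a. finsupp_seq a} \<subseteq> A \<and>
     (\<forall>a\<in>A. \<forall>e>0. \<exists>b. finsupp_seq b \<and> nA (\<lambda>k. a k - b k) < e) \<and>
     (\<forall>n. nA (pn n) = 1)"

definition normed_module ::
  "(nat \<Rightarrow> complex) set \<Rightarrow> ((nat \<Rightarrow> complex) \<Rightarrow> real) \<Rightarrow>
   (complex \<Rightarrow> 'x::real_normed_vector \<Rightarrow> 'x) \<Rightarrow> ((nat \<Rightarrow> complex) \<Rightarrow> 'x \<Rightarrow> 'x) \<Rightarrow> bool" where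
  "normed_module A nA sm act \<longleftrightarrow>
     complex_normed_space sm \<and>
     (\<forall>a\<in>A. \<forall>x y. act a (x + y) = act a x + act a y) \<and>
     (\<forall>a\<in>A. \<forall>c x. act a (sm c x) = sm c (act a x)) \<and>
     (\<forall>a\<in>A. \<forall>b\<in>A. \<forall>x. act (\<lambda>k. a k + b k) x = act a x + act b x) \<and>
     (\<forall>a\<in>A. \<forall>c x. act (\<lambda>k. c * a k) x = sm c (act a x)) \<and>
     (\<forall>a\<in>A. \<forall>b\<in>A. \<forall>x. act (\<lambda>k. a k * b k) x = act a (act b x)) \<and>
     (\<forall>a\<in>A. \<forall>x. norm (act a x) \<le> nA a * norm x)"

definition module_morphism ::
  "(nat \<Rightarrow> complex) set \<Rightarrow>
   (complex \<Rightarrow> 'x::real_normed_vector \<Rightarrow> 'x) \<Rightarrow> ((nat \<Rightarrow> complex) \<Rightarrow> 'x \<Rightarrow> 'x) \<Rightarrow>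
   (complex \<Rightarrow> 'y::real_normed_vector \<Rightarrow> 'y) \<Rightarrow> ((nat \<Rightarrow> complex) \<Rightarrow> 'y \<Rightarrow> 'y) \<Rightarrow>
   ('x \<Rightarrow> 'y) \<Rightarrow> bool" where
  "module_morphism A smX actX smY actY f \<longleftrightarrow>
     bounded_linear f \<and>
     (\<forall>c x. f (smX c x) = smY c (f x)) \<and>
     (\<forall>a\<in>A. \<forall>x. f (actX a x) = actY a (f x))"

definition coisometric :: "('y::real_normed_vector \<Rightarrow> 'x::real_normed_vector) \<Rightarrow> bool" where
  "coisometric \<tau> \<longleftrightarrow> onorm \<tau> \<le> 1 \<and>
     (\<forall>x. \<forall>e>0. \<exists>y. \<tau> y = x \<and> norm y < norm x + e)"

definition essential_module ::
  "(nat \<Rightarrow> complex) set \<Rightarrow> ((nat \<Rightarrow> complex) \<Rightarrow> 'x::real_normed_vector \<Rightarrow> 'x) \<Rightarrow> bool" where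
  "essential_module A act \<longleftrightarrow> closure (span {act a x | a x. a \<in> A}) = UNIV"

definition homogeneous_module :: "((nat \<Rightarrow> complex) \<Rightarrow> 'x::real_normed_vector \<Rightarrow> 'x) \<Rightarrow> bool" where
  "homogeneous_module act \<longleftrightarrow>
     (\<forall>x y. (\<forall>n. norm (act (pn n) x) \<le> norm (act (pn n) y)) \<longrightarrow> norm x \<le> norm y)"

definition finite_type_module :: "((nat \<Rightarrow> complex) \<Rightarrow> 'x::real_normed_vector \<Rightarrow> 'x) \<Rightarrow> bool" where
  "finite_type_module act \<longleftrightarrow> (\<forall>x. \<exists>N. \<forall>n\<ge>N. act (pn n) x = 0)"

definition l10 :: "'l set \<Rightarrow> ('l \<Rightarrow> complex) set" where
  "l10 \<Lambda> = {f. finite {i. f i \<noteq> 0} \<and> (\<forall>i. i \<notin> \<Lambda> \<longrightarrow> f i = 0)}"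

definition l1norm :: "('l \<Rightarrow> complex) \<Rightarrow> real" where
  "l1norm f = (\<Sum>i\<in>{i. f i \<noteq> 0}. cmod (f i))"

definition isometric_iso_l10 ::
  "(complex \<Rightarrow> 'x::real_normed_vector \<Rightarrow> 'x) \<Rightarrow> 'x set \<Rightarrow> 'l set \<Rightarrow> bool" where
  "isometric_iso_l10 sm S \<Lambda> \<longleftrightarrow>
     (\<exists>T. bij_betw T S (l10 \<Lambda>) \<and>
          (\<forall>x\<in>S. \<forall>y\<in>S. T (x + y) = (\<lambda>i. T x i + T y i)) \<and>
          (\<forall>c. \<forall>x\<in>S. T (sm c x) = (\<lambda>i. c * T x i)) \<and>
          (\<forall>x\<in>S. l1norm (T x) = norm x))"

text \<open>Quantification over all X, Y is
  obtained in the theorem via the free type variables of X and Y.\<close>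
definition extremely_projective_wrt ::
  "(nat \<Rightarrow> complex) set \<Rightarrow> ((nat \<Rightarrow> complex) \<Rightarrow> real) \<Rightarrow>
   (complex \<Rightarrow> 'p::real_normed_vector \<Rightarrow> 'p) \<Rightarrow> ((nat \<Rightarrow> complex) \<Rightarrow> 'p \<Rightarrow> 'p) \<Rightarrow>
   (complex \<Rightarrow> 'x::real_normed_vector \<Rightarrow> 'x) \<Rightarrow> ((nat \<Rightarrow> complex) \<Rightarrow> 'x \<Rightarrow> 'x) \<Rightarrow>
   (complex \<Rightarrow> 'y::real_normed_vector \<Rightarrow> 'y) \<Rightarrow> ((nat \<Rightarrow> complex) \<Rightarrow> 'y \<Rightarrow> 'y) \<Rightarrow> bool" where
  "extremely_projective_wrt A nA smP actP smX actX smY actY \<longleftrightarrow>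
     (\<forall>\<tau> \<phi> e. module_morphism A smY actY smX actX \<tau> \<and> coisometric \<tau> \<and>
        module_morphism A smP actP smX actX \<phi> \<and> e > 0 \<longrightarrow>
        (\<exists>\<psi>. module_morphism A smP actP smY actY \<psi> \<and> \<tau> \<circ> \<psi> = \<phi> \<and>
             onorm \<psi> < onorm \<phi> + e))"

end

theory Submission
  imports Defs
begin

lemma pn_finsupp: "finsupp_seq (pn n)"
  unfolding finsupp_seq_def pn_def by simp

locale nmod =
  fixes A :: "(nat \<Rightarrow> complex) set" and nA and sm :: "complex \<Rightarrow> 'x::real_normed_vector \<Rightarrow> 'x" and act
  assumes SA: "sequence_algebra A nA" and NM: "normed_module A nA sm act"
begin

lemma cns: "complex_normed_space sm" using NM unfolding normed_module_def by blast

lemma sm_real: "sm (complex_of_real r) x = r *\<^sub>R x" using cns unfolding complex_normed_space_def by blast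
lemma sm_mult: "sm (c * d) x = sm c (sm d x)" using cns unfolding complex_normed_space_def by blast
lemma sm_addl: "sm (c + d) x = sm c x + sm d x" using cns unfolding complex_normed_space_def by blast
lemma sm_addr: "sm c (x + y) = sm c x + sm c y" using cns unfolding complex_normed_space_def by blast
lemma sm_norm: "norm (sm c x) = cmod c * norm x" using cns unfolding complex_normed_space_def by blast

lemma sm_zerol[simp]: "sm 0 x = 0" using sm_norm[of 0 x] by simp
lemma sm_zeror[simp]: "sm c 0 = 0" using sm_norm[of c 0] by simp
lemma sm_one[simp]: "sm 1 x = x" using sm_real[of 1 x] by simp

lemma sm_sum: "sm c (sum f F) = (\<Sum>i\<in>F. sm c (f i))"
  by (induction F rule: infinite_finite_induct) (auto simp: sm_addr)

lemma pn_A: "pn n \<in> A" using SA pn_finsupp unfolding sequence_algebra_def by blast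

lemma act_add: "a \<in> A \<Longrightarrow> act a (x + y) = act a x + act a y"
  using NM unfolding normed_module_def by blast
lemma act_sm: "a \<in> A \<Longrightarrow> act a (sm c x) = sm c (act a x)"
  using NM unfolding normed_module_def by blast
lemma act_scal: "a \<in> A \<Longrightarrow> act (\<lambda>k. c * a k) x = sm c (act a x)"
  using NM unfolding normed_module_def by blast
lemma act_mult: "a \<in> A \<Longrightarrow> b \<in> A \<Longrightarrow> act (\<lambda>k. a k * b k) x = act a (act b x)"
  using NM unfolding normed_module_def by blast
lemma act_norm: "a \<in> A \<Longrightarrow> norm (act a x) \<le> nA a * norm x"
  using NM unfolding normed_module_def by blast

lemma act_zero[simp]: "a \<in> A \<Longrightarrow> act a 0 = 0"
  using act_add[of a 0 0] by simp

lemma act_diff: "a \<in> A \<Longrightarrow> act a (x - y) = act a x - act a y"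
  using act_add[of a "x - y" y] by (simp add: algebra_simps)

lemma act_sum: "a \<in> A \<Longrightarrow> act a (sum f F) = (\<Sum>i\<in>F. act a (f i))"
  by (induction F rule: infinite_finite_induct) (auto simp: act_add)

lemma act_zerofun: "act (\<lambda>k. 0) x = 0"
proof -
  have "act (\<lambda>k. 0 * pn 0 k) x = sm 0 (act (pn 0) x)" using act_scal[OF pn_A] .
  then show ?thesis by simp
qed

lemma act_pp: "act (pn m) (act (pn n) x) = (if m = n then act (pn n) x else 0)"
proof -
  have "act (pn m) (act (pn n) x) = act (\<lambda>k. pn m k * pn n k) x"
    using act_mult[OF pn_A pn_A] by simp
  moreover have "(\<lambda>k. pn m k * pn n k) = (if m = n then pn n else (\<lambda>k. 0))"
    by (auto simp: pn_def)
  ultimately show ?thesis by (auto simp: act_zerofun)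
qed

lemma act_pa: "a \<in> A \<Longrightarrow> act (pn n) (act a x) = sm (a n) (act (pn n) x)"
proof -
  assume a: "a \<in> A"
  have "act (pn n) (act a x) = act (\<lambda>k. pn n k * a k) x"
    using act_mult[OF pn_A a] by simp
  moreover have "(\<lambda>k. pn n k * a k) = (\<lambda>k. a n * pn n k)"
    by (auto simp: pn_def)
  ultimately show ?thesis using act_scal[OF pn_A] by simp
qed

lemma act_ap: "a \<in> A \<Longrightarrow> act a (act (pn n) x) = sm (a n) (act (pn n) x)"
proof -
  assume a: "a \<in> A"
  have "act a (act (pn n) x) = act (\<lambda>k. a k * pn n k) x"
    using act_mult[OF a pn_A] by simp
  moreover have "(\<lambda>k. a k * pn n k) = (\<lambda>k. a n * pn n k)"
    by (auto simp: pn_def)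
  ultimately show ?thesis using act_scal[OF pn_A] by simp
qed

lemma act_p_norm: "norm (act (pn n) x) \<le> norm x"
  using act_norm[OF pn_A, of n x] SA unfolding sequence_algebra_def by simp

lemma act_pp_same[simp]: "act (pn n) (act (pn n) x) = act (pn n) x"
  using act_pp by simp

lemma sm_linear: "(\<And>x y. f (x + y) = f x + f y) \<Longrightarrow> (\<And>c x. f (sm c x) = sm' c (f x)) \<Longrightarrow>
   (\<And>r x. sm' (complex_of_real r) x = r *\<^sub>R x) \<Longrightarrow> f (r *\<^sub>R x) = r *\<^sub>R f x"
  by (metis sm_real)

lemma homog_decomp:
  assumes H: "homogeneous_module act" and fin: "finite F" and sub: "\<And>n. n \<notin> F \<Longrightarrow> act (pn n) x = 0"
  shows "x = (\<Sum>n\<in>F. act (pn n) x)"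
proof -
  have "\<forall>m. act (pn m) (x - (\<Sum>n\<in>F. act (pn n) x)) = 0"
  proof
    fix m
    have "act (pn m) (x - (\<Sum>n\<in>F. act (pn n) x)) = act (pn m) x - (\<Sum>n\<in>F. act (pn m) (act (pn n) x))"
      by (simp add: act_diff[OF pn_A] act_sum[OF pn_A])
    also have "(\<Sum>n\<in>F. act (pn m) (act (pn n) x)) = (\<Sum>n\<in>F. if m = n then act (pn n) x else 0)"
      by (simp add: act_pp)
    also have "\<dots> = (if m \<in> F then act (pn m) x else 0)"
      using fin by (simp add: sum.delta)
    finally show "act (pn m) (x - (\<Sum>n\<in>F. act (pn n) x)) = 0" using sub by auto
  qed
  then have "norm (x - (\<Sum>n\<in>F. act (pn n) x)) \<le> norm (0::'x)"
    using H unfolding homogeneous_module_def by (metis act_zero pn_A order_refl)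
  then show ?thesis by simp
qed

end

definition ind :: "'l \<Rightarrow> 'l \<Rightarrow> complex" where "ind l = (\<lambda>i. if i = l then 1 else 0)"
definition supp :: "('l \<Rightarrow> complex) \<Rightarrow> 'l set" where "supp f = {i. f i \<noteq> 0}"

lemma mor_lin: "module_morphism A s1 a1 s2 a2 f \<Longrightarrow> linear f"
  unfolding module_morphism_def using bounded_linear.linear by blast
lemma mor_bl: "module_morphism A s1 a1 s2 a2 f \<Longrightarrow> bounded_linear f"
  unfolding module_morphism_def by blast
lemma mor_sm: "module_morphism A s1 a1 s2 a2 f \<Longrightarrow> f (s1 c x) = s2 c (f x)"
  unfolding module_morphism_def by blast
lemma mor_act: "module_morphism A s1 a1 s2 a2 f \<Longrightarrow> a \<in> A \<Longrightarrow> f (a1 a x) = a2 a (f x)"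
  unfolding module_morphism_def by blast

locale proj = P: nmod A nA smP actP + X: nmod A nA smX actX + Y: nmod A nA smY actY
  for A nA and smP :: "complex \<Rightarrow> 'p::real_normed_vector \<Rightarrow> 'p" and actP
    and smX :: "complex \<Rightarrow> 'x::real_normed_vector \<Rightarrow> 'x" and actX
    and smY :: "complex \<Rightarrow> 'y::real_normed_vector \<Rightarrow> 'y" and actY +
  fixes \<tau> :: "'y \<Rightarrow> 'x" and \<phi> :: "'p \<Rightarrow> 'x" and T :: "nat \<Rightarrow> 'p \<Rightarrow> 'l \<Rightarrow> complex"
    and \<Lambda> :: "nat \<Rightarrow> 'l set" and y :: "nat \<Rightarrow> 'l \<Rightarrow> 'y" and \<delta> :: real
  assumes homP: "homogeneous_module actP" and finP: "finite_type_module actP"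
    and homY: "homogeneous_module actY"
    and mtau: "module_morphism A smY actY smX actX \<tau>" and ctau: "coisometric \<tau>"
    and mphi: "module_morphism A smP actP smX actX \<phi>" and dpos: "\<delta> > 0"
    and Tbij: "\<And>n. bij_betw (T n) (range (actP (pn n))) (l10 (\<Lambda> n))"
    and Tadd: "\<And>n u v. u \<in> range (actP (pn n)) \<Longrightarrow> v \<in> range (actP (pn n)) \<Longrightarrow> T n (u + v) = (\<lambda>i. T n u i + T n v i)"
    and Tsm: "\<And>n c u. u \<in> range (actP (pn n)) \<Longrightarrow> T n (smP c u) = (\<lambda>i. c * T n u i)"
    and Tnorm: "\<And>n u. u \<in> range (actP (pn n)) \<Longrightarrow> l1norm (T n u) = norm u"
    and yprop: "\<And>n l. l \<in> \<Lambda> n \<Longrightarrow>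
        \<tau> (y n l) = \<phi> (inv_into (range (actP (pn n))) (T n) (ind l)) \<and> actY (pn n) (y n l) = y n l \<and>
        norm (y n l) \<le> (1 + \<delta>) * norm (\<phi> (inv_into (range (actP (pn n))) (T n) (ind l)))"
begin

abbreviation S where "S n \<equiv> range (actP (pn n))"
definition e where "e n l = inv_into (S n) (T n) (ind l)"

lemma S_iff: "u \<in> S n \<longleftrightarrow> actP (pn n) u = u"
  by (metis P.act_pp_same rangeE rangeI)

lemma S_add: "u \<in> S n \<Longrightarrow> v \<in> S n \<Longrightarrow> u + v \<in> S n"
  by (simp add: S_iff P.act_add[OF P.pn_A])
lemma S_sm: "u \<in> S n \<Longrightarrow> smP c u \<in> S n"
  by (simp add: S_iff P.act_sm[OF P.pn_A])
lemma S_zero: "0 \<in> S n"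
  by (simp add: S_iff P.pn_A)
lemma S_sum: "(\<And>i. i \<in> F \<Longrightarrow> g i \<in> S n) \<Longrightarrow> sum g F \<in> S n"
  by (induction F rule: infinite_finite_induct) (auto simp: S_zero S_add simp del: fun_upd_apply)

lemma T_zero: "T n 0 = (\<lambda>i. 0)"
proof -
  have "T n (0 + 0) = (\<lambda>i. T n 0 i + T n 0 i)" using Tadd S_zero by blast
  then show ?thesis by (metis add.right_neutral add_cancel_right_right)
qed

lemma T_sum: "finite F \<Longrightarrow> (\<And>i. i \<in> F \<Longrightarrow> g i \<in> S n) \<Longrightarrow> T n (sum g F) = (\<lambda>j. \<Sum>i\<in>F. T n (g i) j)"
proof (induction F rule: finite_induct)
  case empty
  then show ?case by (simp add: T_zero)
next
  case (insert x F)
  have "T n (sum g (insert x F)) = T n (g x + sum g F)" using insert by simp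
  also have "\<dots> = (\<lambda>i. T n (g x) i + T n (sum g F) i)"
    using insert by (intro Tadd) (auto intro: S_sum)
  finally show ?case using insert by simp
qed

lemma T_in: "u \<in> S n \<Longrightarrow> finite (supp (T n u)) \<and> supp (T n u) \<subseteq> \<Lambda> n"
  using bij_betwE[OF Tbij] unfolding l10_def supp_def by blast

lemma ind_l10: "l \<in> \<Lambda> n \<Longrightarrow> ind l \<in> l10 (\<Lambda> n)"
  unfolding l10_def ind_def by auto

lemma e_S: "l \<in> \<Lambda> n \<Longrightarrow> e n l \<in> S n"
  unfolding e_def by (metis Tbij bij_betw_def ind_l10 inv_into_into)

lemma T_e: "l \<in> \<Lambda> n \<Longrightarrow> T n (e n l) = ind l"
  unfolding e_def by (metis Tbij bij_betw_def ind_l10 f_inv_into_f)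

lemma e_norm: "l \<in> \<Lambda> n \<Longrightarrow> norm (e n l) = 1"
proof -
  assume l: "l \<in> \<Lambda> n"
  have "norm (e n l) = l1norm (ind l)" using Tnorm[OF e_S[OF l]] T_e[OF l] by simp
  also have "\<dots> = 1" unfolding l1norm_def ind_def by simp
  finally show ?thesis .
qed

lemma expand:
  assumes u: "u \<in> S n" and F: "finite F" "supp (T n u) \<subseteq> F" "F \<subseteq> \<Lambda> n"
  shows "u = (\<Sum>l\<in>F. smP (T n u l) (e n l))"
proof -
  have inS: "(\<Sum>l\<in>F. smP (T n u l) (e n l)) \<in> S n"
    using F by (intro S_sum S_sm e_S) auto
  have "T n (\<Sum>l\<in>F. smP (T n u l) (e n l)) = (\<lambda>j. \<Sum>l\<in>F. T n (smP (T n u l) (e n l)) j)"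
    using F by (intro T_sum) (auto intro: S_sm e_S)
  also have "\<dots> = (\<lambda>j. \<Sum>l\<in>F. T n u l * ind l j)"
    using F by (intro ext sum.cong) (auto simp: Tsm e_S T_e)
  also have "\<dots> = T n u"
  proof
    fix j
    have "(\<Sum>l\<in>F. T n u l * ind l j) = (\<Sum>l\<in>F. if j = l then T n u l else 0)"
      by (intro sum.cong) (auto simp: ind_def)
    also have "\<dots> = (if j \<in> F then T n u j else 0)" using F by (simp add: sum.delta)
    also have "\<dots> = T n u j" using F unfolding supp_def by auto
    finally show "(\<Sum>l\<in>F. T n u l * ind l j) = T n u j" .
  qed
  finally show ?thesis
    using inS u Tbij unfolding bij_betw_def by (metis inj_onD)
qed

end

context proj begin

lemma y_tau: "l \<in> \<Lambda> n \<Longrightarrow> \<tau> (y n l) = \<phi> (e n l)" using yprop unfolding e_def by blast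
lemma y_S: "l \<in> \<Lambda> n \<Longrightarrow> actY (pn n) (y n l) = y n l" using yprop by blast
lemma y_norm: "l \<in> \<Lambda> n \<Longrightarrow> norm (y n l) \<le> (1 + \<delta>) * norm (\<phi> (e n l))" using yprop unfolding e_def by blast

definition psin where "psin n u = (\<Sum>l\<in>supp (T n u). smY (T n u l) (y n l))"

lemma psin_F:
  assumes "u \<in> S n" "finite F" "supp (T n u) \<subseteq> F"
  shows "psin n u = (\<Sum>l\<in>F. smY (T n u l) (y n l))"
  unfolding psin_def using assms by (intro sum.mono_neutral_left) (auto simp: supp_def)

lemma psin_zero: "psin n 0 = 0"
  unfolding psin_def by (simp add: T_zero supp_def)

lemma psin_add: assumes u: "u \<in> S n" and v: "v \<in> S n" shows "psin n (u + v) = psin n u + psin n v"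
proof -
  let ?F = "supp (T n u) \<union> supp (T n v)"
  have fin: "finite ?F" using T_in u v by blast
  have sub: "supp (T n (u + v)) \<subseteq> ?F" using Tadd[OF u v] by (auto simp: supp_def)
  have "psin n (u + v) = (\<Sum>l\<in>?F. smY (T n (u+v) l) (y n l))" using psin_F[OF S_add[OF u v] fin sub] .
  also have "\<dots> = (\<Sum>l\<in>?F. smY (T n u l) (y n l)) + (\<Sum>l\<in>?F. smY (T n v l) (y n l))"
    by (simp add: Tadd[OF u v] Y.sm_addl sum.distrib)
  also have "\<dots> = psin n u + psin n v"
    using psin_F[OF u fin] psin_F[OF v fin] by simp
  finally show ?thesis .
qed

lemma psin_sm: assumes u: "u \<in> S n" shows "psin n (smP c u) = smY c (psin n u)"
proof -
  let ?F = "supp (T n u)"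
  have fin: "finite ?F" using T_in u by blast
  have sub: "supp (T n (smP c u)) \<subseteq> ?F" using Tsm[OF u] by (auto simp: supp_def)
  have "psin n (smP c u) = (\<Sum>l\<in>?F. smY (T n (smP c u) l) (y n l))" using psin_F[OF S_sm[OF u] fin sub] .
  also have "\<dots> = smY c (psin n u)"
    by (simp add: Tsm[OF u] Y.sm_mult Y.sm_sum psin_def)
  finally show ?thesis .
qed

lemma psin_S: assumes u: "u \<in> S n" shows "actY (pn n) (psin n u) = psin n u"
proof -
  have "actY (pn n) (psin n u) = (\<Sum>l\<in>supp (T n u). smY (T n u l) (actY (pn n) (y n l)))"
    unfolding psin_def by (simp add: Y.act_sum[OF Y.pn_A] Y.act_sm[OF Y.pn_A])
  also have "\<dots> = psin n u" unfolding psin_def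
    using T_in[OF u] y_S by (intro sum.cong) auto
  finally show ?thesis .
qed

end

context proj begin

lemma psin_tau: assumes u: "u \<in> S n" shows "\<tau> (psin n u) = \<phi> u"
proof -
  let ?F = "supp (T n u)"
  have F: "finite ?F" "?F \<subseteq> \<Lambda> n" using T_in[OF u] by auto
  have "\<tau> (psin n u) = (\<Sum>l\<in>?F. \<tau> (smY (T n u l) (y n l)))"
    unfolding psin_def using linear_sum[OF mor_lin[OF mtau]] by blast
  also have "\<dots> = (\<Sum>l\<in>?F. \<phi> (smP (T n u l) (e n l)))"
    using F by (intro sum.cong) (auto simp: mor_sm[OF mtau] mor_sm[OF mphi] y_tau)
  also have "\<dots> = \<phi> (\<Sum>l\<in>?F. smP (T n u l) (e n l))"
    using linear_sum[OF mor_lin[OF mphi]] by metis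
  also have "\<dots> = \<phi> u" using expand[OF u F(1) _ F(2)] by simp
  finally show ?thesis .
qed

lemma psin_norm: assumes u: "u \<in> S n"
  shows "norm (psin n u) \<le> (1 + \<delta>) * (\<Sum>l\<in>supp (T n u). cmod (T n u l) * norm (\<phi> (e n l)))"
proof -
  let ?F = "supp (T n u)"
  have F: "finite ?F" "?F \<subseteq> \<Lambda> n" using T_in[OF u] by auto
  have "norm (psin n u) \<le> (\<Sum>l\<in>?F. norm (smY (T n u l) (y n l)))"
    unfolding psin_def by (rule norm_sum)
  also have "\<dots> \<le> (\<Sum>l\<in>?F. (1 + \<delta>) * (cmod (T n u l) * norm (\<phi> (e n l))))"
  proof (rule sum_mono)
    fix l assume l: "l \<in> ?F"
    have "norm (smY (T n u l) (y n l)) = cmod (T n u l) * norm (y n l)" by (rule Y.sm_norm)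
    also have "\<dots> \<le> cmod (T n u l) * ((1 + \<delta>) * norm (\<phi> (e n l)))"
      using y_norm l F by (intro mult_left_mono) auto
    finally show "norm (smY (T n u l) (y n l)) \<le> (1 + \<delta>) * (cmod (T n u l) * norm (\<phi> (e n l)))"
      by (simp add: algebra_simps)
  qed
  also have "\<dots> = (1 + \<delta>) * (\<Sum>l\<in>?F. cmod (T n u l) * norm (\<phi> (e n l)))"
    by (simp add: sum_distrib_left)
  finally show ?thesis .
qed

lemma max_bound: assumes u: "u \<in> S n" and nz: "u \<noteq> 0"
  shows "\<exists>l\<in>supp (T n u). (\<Sum>l'\<in>supp (T n u). cmod (T n u l') * norm (\<phi> (e n l'))) \<le> norm u * norm (\<phi> (e n l))"
proof -
  let ?F = "supp (T n u)"
  let ?g = "\<lambda>l. norm (\<phi> (e n l))"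
  have F: "finite ?F" "?F \<subseteq> \<Lambda> n" using T_in[OF u] by auto
  have nu: "norm u = (\<Sum>l\<in>?F. cmod (T n u l))"
    using Tnorm[OF u] unfolding l1norm_def supp_def by simp
  have ne: "?F \<noteq> {}" using nu nz by auto
  define M where "M = Max (?g ` ?F)"
  have "M \<in> ?g ` ?F" unfolding M_def using F ne by (intro Max_in) auto
  then obtain l where l: "l \<in> ?F" "?g l = M" by auto
  have "(\<Sum>l'\<in>?F. cmod (T n u l') * ?g l') \<le> (\<Sum>l'\<in>?F. cmod (T n u l') * M)"
    unfolding M_def using F by (intro sum_mono mult_left_mono Max_ge) auto
  also have "\<dots> = norm u * ?g l" using l nu by (simp add: sum_distrib_right)
  finally show ?thesis using l by blast
qed

end

context proj begin

definition Nx where "Nx x = {n. actP (pn n) x \<noteq> 0}"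
definition psi where "psi x = (\<Sum>n\<in>Nx x. psin n (actP (pn n) x))"

lemma Nx_fin: "finite (Nx x)"
proof -
  obtain N where "\<forall>n\<ge>N. actP (pn n) x = 0" using finP unfolding finite_type_module_def by blast
  then have "Nx x \<subseteq> {..<N}" unfolding Nx_def using not_less by auto
  then show ?thesis using finite_subset by blast
qed

lemma psi_F: "finite F \<Longrightarrow> Nx x \<subseteq> F \<Longrightarrow> psi x = (\<Sum>n\<in>F. psin n (actP (pn n) x))"
  unfolding psi_def by (intro sum.mono_neutral_left) (auto simp: Nx_def psin_zero)

lemma xn_S: "actP (pn n) x \<in> S n" by simp

lemma psi_p: "actY (pn m) (psi x) = psin m (actP (pn m) x)"
proof -
  let ?F = "Nx x \<union> {m}"
  have fin: "finite ?F" using Nx_fin by simp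
  have px: "psi x = (\<Sum>n\<in>?F. psin n (actP (pn n) x))" by (rule psi_F[OF fin]) auto
  have "actY (pn m) (psi x) = (\<Sum>n\<in>?F. actY (pn m) (psin n (actP (pn n) x)))"
    unfolding px by (rule Y.act_sum[OF Y.pn_A])
  also have "\<dots> = (\<Sum>n\<in>?F. if m = n then psin n (actP (pn n) x) else 0)"
  proof (intro sum.cong refl)
    fix n
    show "actY (pn m) (psin n (actP (pn n) x)) = (if m = n then psin n (actP (pn n) x) else 0)"
      using Y.act_pp[of m n "psin n (actP (pn n) x)"] psin_S[OF xn_S, of n x] by simp
  qed
  also have "\<dots> = psin m (actP (pn m) x)" using fin by (simp add: sum.delta)
  finally show ?thesis .
qed

lemma psi_add: "psi (x + z) = psi x + psi z"
proof -
  let ?F = "Nx x \<union> Nx z \<union> Nx (x + z)"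
  have fin: "finite ?F" using Nx_fin by simp
  have "psi (x + z) = (\<Sum>n\<in>?F. psin n (actP (pn n) (x + z)))" using psi_F[OF fin] by simp
  also have "\<dots> = (\<Sum>n\<in>?F. psin n (actP (pn n) x) + psin n (actP (pn n) z))"
    by (intro sum.cong refl) (simp add: P.act_add[OF P.pn_A] psin_add)
  also have "\<dots> = psi x + psi z"
  proof -
    have px: "psi x = (\<Sum>n\<in>?F. psin n (actP (pn n) x))" by (rule psi_F[OF fin]) auto
    have pz: "psi z = (\<Sum>n\<in>?F. psin n (actP (pn n) z))" by (rule psi_F[OF fin]) auto
    show ?thesis unfolding px pz by (rule sum.distrib)
  qed
  finally show ?thesis .
qed

lemma psi_sm: "psi (smP c x) = smY c (psi x)"
proof -
  let ?F = "Nx x \<union> Nx (smP c x)"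
  have fin: "finite ?F" using Nx_fin by simp
  have "psi (smP c x) = (\<Sum>n\<in>?F. psin n (actP (pn n) (smP c x)))" using psi_F[OF fin] by simp
  also have "\<dots> = (\<Sum>n\<in>?F. smY c (psin n (actP (pn n) x)))"
    by (intro sum.cong refl) (simp add: P.act_sm[OF P.pn_A] psin_sm)
  also have "\<dots> = smY c (psi x)" using psi_F[OF fin, of x] by (simp add: Y.sm_sum)
  finally show ?thesis .
qed

lemma psi_act: assumes a: "a \<in> A" shows "psi (actP a x) = actY a (psi x)"
proof -
  let ?F = "Nx x \<union> Nx (actP a x)"
  have fin: "finite ?F" using Nx_fin by simp
  have "psi (actP a x) = (\<Sum>n\<in>?F. psin n (actP (pn n) (actP a x)))" using psi_F[OF fin] by simp
  also have "\<dots> = (\<Sum>n\<in>?F. smY (a n) (psin n (actP (pn n) x)))"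
    by (intro sum.cong refl) (simp add: P.act_pa[OF a] psin_sm)
  also have "\<dots> = (\<Sum>n\<in>?F. actY a (psin n (actP (pn n) x)))"
  proof (intro sum.cong refl)
    fix n
    show "smY (a n) (psin n (actP (pn n) x)) = actY a (psin n (actP (pn n) x))"
      using Y.act_ap[OF a, of n "psin n (actP (pn n) x)"] psin_S[OF xn_S, of n x] by simp
  qed
  also have "\<dots> = actY a (psi x)" using psi_F[OF fin, of x] by (simp add: Y.act_sum[OF a])
  finally show ?thesis .
qed

lemma psi_tau: "\<tau> (psi x) = \<phi> x"
proof -
  have "\<tau> (psi x) = (\<Sum>n\<in>Nx x. \<tau> (psin n (actP (pn n) x)))"
    unfolding psi_def using linear_sum[OF mor_lin[OF mtau]] by blast
  also have "\<dots> = (\<Sum>n\<in>Nx x. \<phi> (actP (pn n) x))" by (simp add: psin_tau)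
  also have "\<dots> = \<phi> (\<Sum>n\<in>Nx x. actP (pn n) x)"
    using linear_sum[OF mor_lin[OF mphi]] by metis
  also have "(\<Sum>n\<in>Nx x. actP (pn n) x) = x"
    using P.homog_decomp[OF homP Nx_fin] unfolding Nx_def by auto
  finally show ?thesis .
qed

end

context proj begin

lemma tau_le: "norm (\<tau> z) \<le> norm z"
proof -
  have "norm (\<tau> z) \<le> onorm \<tau> * norm z" using onorm[OF mor_bl[OF mtau]] .
  also have "\<dots> \<le> 1 * norm z" using ctau unfolding coisometric_def by (intro mult_right_mono) auto
  finally show ?thesis by simp
qed

lemma cmod_d: "cmod (1 + complex_of_real \<delta>) = 1 + \<delta>"
  using dpos by (metis abs_of_pos add_pos_pos norm_of_real of_real_1 of_real_add zero_less_one)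

lemma psi_norm_eta: assumes eta: "\<eta> > 0"
  shows "norm (psi x) \<le> (1 + \<delta>) * (onorm \<phi> * norm x + \<eta>)"
proof -
  let ?xn = "\<lambda>n. actP (pn n) x"
  let ?B = "\<lambda>n l. (\<Sum>l'\<in>supp (T n (?xn n)). cmod (T n (?xn n) l') * norm (\<phi> (e n l'))) \<le> norm (?xn n) * norm (\<phi> (e n l))"
  have "\<forall>n\<in>Nx x. \<exists>l. l \<in> supp (T n (?xn n)) \<and> ?B n l"
    using max_bound[OF xn_S] unfolding Nx_def by blast
  then obtain lm where lm: "\<And>n. n \<in> Nx x \<Longrightarrow> lm n \<in> supp (T n (?xn n)) \<and> ?B n (lm n)"
    by metis
  have lmL: "n \<in> Nx x \<Longrightarrow> lm n \<in> \<Lambda> n" for n using lm T_in[OF xn_S] by blast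
  define x' where "x' = (\<Sum>n\<in>Nx x. smP (complex_of_real (norm (?xn n))) (e n (lm n)))"
  have px': "actP (pn m) x' = (if m \<in> Nx x then smP (complex_of_real (norm (?xn m))) (e m (lm m)) else 0)" for m
  proof -
    have "actP (pn m) x' = (\<Sum>n\<in>Nx x. smP (complex_of_real (norm (?xn n))) (actP (pn m) (e n (lm n))))"
      unfolding x'_def by (simp add: P.act_sum[OF P.pn_A] P.act_sm[OF P.pn_A])
    also have "\<dots> = (\<Sum>n\<in>Nx x. if m = n then smP (complex_of_real (norm (?xn n))) (e n (lm n)) else 0)"
    proof (intro sum.cong refl)
      fix n assume n: "n \<in> Nx x"
      have "actP (pn m) (e n (lm n)) = actP (pn m) (actP (pn n) (e n (lm n)))"
        using e_S[OF lmL[OF n]] S_iff by metis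
      also have "\<dots> = (if m = n then e n (lm n) else 0)"
        using P.act_pp e_S[OF lmL[OF n]] S_iff by metis
      finally show "smP (complex_of_real (norm (?xn n))) (actP (pn m) (e n (lm n))) =
          (if m = n then smP (complex_of_real (norm (?xn n))) (e n (lm n)) else 0)" by simp
    qed
    also have "\<dots> = (if m \<in> Nx x then smP (complex_of_real (norm (?xn m))) (e m (lm m)) else 0)"
      using Nx_fin by (simp add: sum.delta)
    finally show ?thesis .
  qed
  have nx': "norm (actP (pn m) x') = norm (?xn m)" for m
  proof (cases "m \<in> Nx x")
    case True
    then show ?thesis using px' P.sm_norm e_norm[OF lmL[OF True]] by simp
  next
    case False
    then show ?thesis using px' unfolding Nx_def by simp
  qed
  have x'le: "norm x' \<le> norm x" using homP nx' unfolding homogeneous_module_def by simp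
  obtain w where w: "\<tau> w = \<phi> x'" "norm w < norm (\<phi> x') + \<eta>"
    using ctau eta unfolding coisometric_def by blast
  have "norm (\<phi> x') \<le> onorm \<phi> * norm x'" using onorm[OF mor_bl[OF mphi]] .
  also have "\<dots> \<le> onorm \<phi> * norm x" using x'le onorm_pos_le[OF mor_bl[OF mphi]] by (rule mult_left_mono)
  finally have wle: "norm w \<le> onorm \<phi> * norm x + \<eta>" using w by simp
  have "\<forall>m. norm (actY (pn m) (psi x)) \<le> norm (actY (pn m) (smY (complex_of_real (1 + \<delta>)) w))"
  proof
    fix m
    have R: "norm (actY (pn m) (smY (complex_of_real (1 + \<delta>)) w)) = (1 + \<delta>) * norm (actY (pn m) w)"
      using dpos by (simp add: Y.act_sm[OF Y.pn_A] Y.sm_norm cmod_d)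
    have L: "norm (actY (pn m) (psi x)) = norm (psin m (?xn m))" by (simp add: psi_p)
    show "norm (actY (pn m) (psi x)) \<le> norm (actY (pn m) (smY (complex_of_real (1 + \<delta>)) w))"
    proof (cases "m \<in> Nx x")
      case False
      then have "?xn m = 0" unfolding Nx_def by simp
      then show ?thesis using L by (simp add: psin_zero)
    next
      case True
      have "norm (psin m (?xn m)) \<le> (1 + \<delta>) * (\<Sum>l\<in>supp (T m (?xn m)). cmod (T m (?xn m) l) * norm (\<phi> (e m l)))"
        by (rule psin_norm[OF xn_S])
      also have "\<dots> \<le> (1 + \<delta>) * (norm (?xn m) * norm (\<phi> (e m (lm m))))"
        using lm[OF True] dpos by (intro mult_left_mono) auto
      also have "norm (?xn m) * norm (\<phi> (e m (lm m))) = norm (\<phi> (actP (pn m) x'))"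
        using True px' by (simp add: mor_sm[OF mphi] X.sm_norm)
      also have "\<dots> = norm (\<tau> (actY (pn m) w))"
        by (simp add: mor_act[OF mphi P.pn_A] mor_act[OF mtau Y.pn_A] w(1))
      also have "\<dots> \<le> norm (actY (pn m) w)" by (rule tau_le)
      finally show ?thesis using L R dpos by (simp add: mult_left_mono)
    qed
  qed
  then have "norm (psi x) \<le> norm (smY (complex_of_real (1 + \<delta>)) w)"
    using homY unfolding homogeneous_module_def by blast
  also have "\<dots> = (1 + \<delta>) * norm w" using dpos by (simp add: Y.sm_norm cmod_d)
  also have "\<dots> \<le> (1 + \<delta>) * (onorm \<phi> * norm x + \<eta>)" using wle dpos by (intro mult_left_mono) auto
  finally show ?thesis .
qed

lemma psi_norm: "norm (psi x) \<le> (1 + \<delta>) * onorm \<phi> * norm x"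
proof -
  have "norm (psi x) / (1 + \<delta>) \<le> onorm \<phi> * norm x"
  proof (rule field_le_epsilon)
    fix \<eta> :: real assume "\<eta> > 0"
    then show "norm (psi x) / (1 + \<delta>) \<le> onorm \<phi> * norm x + \<eta>"
      using psi_norm_eta[of \<eta> x] dpos by (simp add: divide_simps mult.commute)
  qed
  then show ?thesis using dpos by (simp add: divide_simps mult_ac)
qed

lemma psi_mor: "module_morphism A smP actP smY actY psi"
  unfolding module_morphism_def
proof (intro conjI allI ballI)
  show "bounded_linear psi"
  proof (rule bounded_linear_intro)
    show "psi (x + z) = psi x + psi z" for x z by (rule psi_add)
    show "psi (r *\<^sub>R x) = r *\<^sub>R psi x" for r x
      using psi_sm[of "complex_of_real r" x] by (simp add: P.sm_real Y.sm_real)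
    show "norm (psi x) \<le> norm x * ((1 + \<delta>) * onorm \<phi>)" for x
      using psi_norm[of x] by (simp add: mult.commute mult.left_commute)
  qed
  show "psi (smP c x) = smY c (psi x)" for c x by (rule psi_sm)
  show "psi (actP a x) = actY a (psi x)" if "a \<in> A" for a x using psi_act[OF that] .
qed

lemma psi_onorm: "onorm psi \<le> (1 + \<delta>) * onorm \<phi>"
  using psi_norm dpos onorm_pos_le[OF mor_bl[OF mphi]] by (intro onorm_bound) auto

lemma psi_comp: "\<tau> \<circ> psi = \<phi>"
  using psi_tau by auto

end

theorem theorem3p1:
  fixes A :: "(nat \<Rightarrow> complex) set" and nA :: "(nat \<Rightarrow> complex) \<Rightarrow> real"
    and smP :: "complex \<Rightarrow> 'p::real_normed_vector \<Rightarrow> 'p"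
    and actP :: "(nat \<Rightarrow> complex) \<Rightarrow> 'p \<Rightarrow> 'p"
    and \<Lambda> :: "nat \<Rightarrow> 'l set"
    and smX :: "complex \<Rightarrow> 'x::real_normed_vector \<Rightarrow> 'x"
    and actX :: "(nat \<Rightarrow> complex) \<Rightarrow> 'x \<Rightarrow> 'x"
    and smY :: "complex \<Rightarrow> 'y::real_normed_vector \<Rightarrow> 'y"
    and actY :: "(nat \<Rightarrow> complex) \<Rightarrow> 'y \<Rightarrow> 'y"
  assumes "sequence_algebra A nA"
    and "normed_module A nA smP actP"
    and "homogeneous_module actP"
    and "finite_type_module actP"
    and "\<forall>n. isometric_iso_l10 smP (range (actP (pn n))) (\<Lambda> n)"
    and "normed_module A nA smX actX" and "essential_module A actX" and "homogeneous_module actX"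
    and "normed_module A nA smY actY" and "essential_module A actY" and "homogeneous_module actY"
  shows "extremely_projective_wrt A nA smP actP smX actX smY actY"
  unfolding extremely_projective_wrt_def
proof (intro allI impI)
  fix \<tau> :: "'y \<Rightarrow> 'x" and \<phi> :: "'p \<Rightarrow> 'x" and e :: real
  assume H: "module_morphism A smY actY smX actX \<tau> \<and> coisometric \<tau> \<and>
        module_morphism A smP actP smX actX \<phi> \<and> e > 0"
  then have mtau: "module_morphism A smY actY smX actX \<tau>" and ctau: "coisometric \<tau>"
    and mphi: "module_morphism A smP actP smX actX \<phi>" and epos: "e > 0" by auto
  interpret P: nmod A nA smP actP using assms(1,2) by unfold_locales
  interpret X: nmod A nA smX actX using assms(1,6) by unfold_locales
  interpret Y: nmod A nA smY actY using assms(1,9) by unfold_locales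
  obtain T where T: "\<forall>n. bij_betw (T n) (range (actP (pn n))) (l10 (\<Lambda> n)) \<and>
          (\<forall>x\<in>range (actP (pn n)). \<forall>y\<in>range (actP (pn n)). T n (x + y) = (\<lambda>i. T n x i + T n y i)) \<and>
          (\<forall>c. \<forall>x\<in>range (actP (pn n)). T n (smP c x) = (\<lambda>i. c * T n x i)) \<and>
          (\<forall>x\<in>range (actP (pn n)). l1norm (T n x) = norm x)"
    using choice[OF assms(5)[unfolded isometric_iso_l10_def]] by blast
  define K where "K = onorm \<phi>"
  have K0: "K \<ge> 0" unfolding K_def by (rule onorm_pos_le[OF mor_bl[OF mphi]])
  define \<delta> where "\<delta> = e / (2 * (K + 1))"
  have dpos: "\<delta> > 0" unfolding \<delta>_def using epos K0 by simp
  have "\<forall>n l. \<exists>yy. l \<in> \<Lambda> n \<longrightarrow>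
        \<tau> yy = \<phi> (inv_into (range (actP (pn n))) (T n) (ind l)) \<and> actY (pn n) yy = yy \<and>
        norm yy \<le> (1 + \<delta>) * norm (\<phi> (inv_into (range (actP (pn n))) (T n) (ind l)))"
  proof (intro allI)
    fix n l
    show "\<exists>yy. l \<in> \<Lambda> n \<longrightarrow>
        \<tau> yy = \<phi> (inv_into (range (actP (pn n))) (T n) (ind l)) \<and> actY (pn n) yy = yy \<and>
        norm yy \<le> (1 + \<delta>) * norm (\<phi> (inv_into (range (actP (pn n))) (T n) (ind l)))"
    proof (cases "l \<in> \<Lambda> n")
      case False then show ?thesis by blast
    next
      case True
      define u where "u = inv_into (range (actP (pn n))) (T n) (ind l)"
      have "ind l \<in> l10 (\<Lambda> n)" using True unfolding l10_def ind_def by auto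
      then have "u \<in> range (actP (pn n))" unfolding u_def using T by (metis bij_betw_def inv_into_into)
      then have uS: "actP (pn n) u = u" by (metis P.act_pp_same rangeE)
      show ?thesis
      proof (cases "\<phi> u = 0")
        case True
        then show ?thesis unfolding u_def[symmetric]
          by (intro exI[of _ 0]) (simp add: linear_0[OF mor_lin[OF mtau]] Y.pn_A)
      next
        case False
        then have "\<delta> * norm (\<phi> u) > 0" using dpos by simp
        then obtain y0 where y0: "\<tau> y0 = \<phi> u" "norm y0 < norm (\<phi> u) + \<delta> * norm (\<phi> u)"
          using ctau unfolding coisometric_def by blast
        have "\<tau> (actY (pn n) y0) = \<phi> u"
          using y0(1) uS by (metis mor_act[OF mtau Y.pn_A] mor_act[OF mphi P.pn_A])
        moreover have "norm (actY (pn n) y0) \<le> (1 + \<delta>) * norm (\<phi> u)"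
          using Y.act_p_norm[of n y0] y0(2) by (simp add: algebra_simps)
        ultimately show ?thesis unfolding u_def[symmetric]
          by (intro exI[of _ "actY (pn n) y0"]) simp
      qed
    qed
  qed
  then obtain y where y: "\<And>n l. l \<in> \<Lambda> n \<Longrightarrow>
        \<tau> (y n l) = \<phi> (inv_into (range (actP (pn n))) (T n) (ind l)) \<and> actY (pn n) (y n l) = y n l \<and>
        norm (y n l) \<le> (1 + \<delta>) * norm (\<phi> (inv_into (range (actP (pn n))) (T n) (ind l)))"
    by metis
  interpret Q: proj A nA smP actP smX actX smY actY \<tau> \<phi> T \<Lambda> y \<delta>
  proof (unfold_locales)
    show "homogeneous_module actP" "finite_type_module actP" "homogeneous_module actY"
      using assms by auto
  qed (use mtau ctau mphi dpos T y in auto)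
  show "\<exists>\<psi>. module_morphism A smP actP smY actY \<psi> \<and> \<tau> \<circ> \<psi> = \<phi> \<and> onorm \<psi> < onorm \<phi> + e"
  proof (intro exI conjI)
    show "module_morphism A smP actP smY actY Q.psi" by (rule Q.psi_mor)
    show "\<tau> \<circ> Q.psi = \<phi>" by (rule Q.psi_comp)
    have "onorm Q.psi \<le> (1 + \<delta>) * K" using Q.psi_onorm unfolding K_def .
    also have "\<dots> = K + \<delta> * K" by (simp add: algebra_simps)
    also have "\<delta> * K < e"
    proof -
      have "\<delta> * K = e * (K / (2 * (K + 1)))" unfolding \<delta>_def by simp
      also have "K / (2 * (K + 1)) < 1" using K0 by (simp add: divide_simps)
      then have "e * (K / (2 * (K + 1))) < e * 1" using epos by (intro mult_strict_left_mono)
      finally show ?thesis by simp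
    qed
    finally show "onorm Q.psi < onorm \<phi> + e" unfolding K_def by simp
  qed
qed

end
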